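(* Let $\mathcal{V}$ be the set of sequences $v=(v_j)_{j\in\mathbb{Z}_+}$ in $[1,\infty)$ with $v_0=1$ and $v_n\ge\sum_{j<n}v_j$ for all $n\in\mathbb{N}$, and for $v\in\mathcal{V}$ and $n\in\mathbb{N}$ put $u_n=v_n-\sum_{j<n}v_j$. For each $v\in\mathcal{V}$ there is exactly one hermitian hypergroup deformation $(\mathbb{Z}_+,* )$ of $(\mathbb{Z}_+,<,\max)$ satisfying $(\delta_n*\delta_n)(0)=1/v_n$ for all $n\in\mathbb{Z}_+$. Moreover, for this deformation, writing $\mathcal{L}_n=\{k\in\mathbb{Z}_+:k<n\}$ and $\lambda$ for its Haar measure: (i) $\lambda(n)=v_n$ for $n\in\mathbb{Z}_+$ and $\lambda(n)-\lambda(\mathcal{L}_n)=u_n$ for $n\in\mathbb{N}$; (ii) $\lambda(\mathcal{L}_n)\le\lambda(n)$ for $n\in\mathbb{N}$; (iii) for $n\in\mathbb{N}$: (a) $(\delta_n*\delta_n)(m)=\lambda(m)/\lambda(n)$ for $m<n$; (b) $(\delta_n*\delta_n)(n)=(\lambda(n)-\lambda(\mathcal{L}_n))/\lambda(n)$; (c) $(\delta_n*\delta_n)(m)=0$ for $m>n$; (iv) for $n\in\mathbb{N}$, $\operatorname{spt}(\delta_n*\delta_n)=\mathcal{L}_n$ if $\lambda(n)=\lambda(\mathcal{L}_n)$, and $\operatorname{spt}(\delta_n*\delta_n)=\mathcal{L}_n\cup\{n\}$ if $\lambda(n)>\lambda(\mathcal{L}_n)$.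
   Context: $\mathbb{Z}_+=\{0,1,2,\dots\}$, $\mathbb{N}=\{1,2,\dots\}$. A hermitian hypergroup deformation of $(\mathbb{Z}_+,<,\max)$ means a convolution $*$ on $\mathbb{Z}_+$ (discrete topology) given on point masses by $\delta_m*\delta_n=\delta_{\max\{m,n\}}$ for $m\ne n$ or $m=n=0$, and $\delta_n*\delta_n=q_n$ for $n\ge1$, where $q_n$ is a probability measure with finite support containing $0$, such that $(\mathbb{Z}_+,* )$ is a hermitian discrete hypergroup: $*$ is associative, $0$ is an identity, $\delta_m*\delta_n=\delta_n*\delta_m$, and $0\in\operatorname{spt}(\delta_m*\delta_n)$ iff $m=n$. For a measure $\mu$, $\mu(j)=\mu(\{j\})$. The Haar measure $\lambda$ of such a hermitian discrete hypergroup is normalized by $\lambda(0)=1$; it is given by $\lambda(n)=1/(\delta_n*\delta_n)(0)$ for $n\ne 0$, and $\lambda(A)=\sum_{j\in A}\lambda(j)$. *)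

theory Defs
  imports Complex_Main
begin

text \<open>Finitely supported measures on Z_+ are functions nat => real (point masses).
  A convolution structure on point masses is D :: nat => nat => (nat => real),
  where D m n is the measure delta_m * delta_n.\<close>

definition pmass :: "nat \<Rightarrow> (nat \<Rightarrow> real)" where
  "pmass a = (\<lambda>k. if k = a then 1 else 0)"

definition spt :: "(nat \<Rightarrow> real) \<Rightarrow> nat set" where
  "spt \<mu> = {k. \<mu> k \<noteq> 0}"

definition fin_prob :: "(nat \<Rightarrow> real) \<Rightarrow> bool" where
  "fin_prob \<mu> \<longleftrightarrow> (\<forall>k. 0 \<le> \<mu> k) \<and> finite (spt \<mu>) \<and> (\<Sum>k\<in>spt \<mu>. \<mu> k) = 1"

definition conv :: "(nat \<Rightarrow> nat \<Rightarrow> (nat \<Rightarrow> real)) \<Rightarrow> (nat \<Rightarrow> real) \<Rightarrow> (nat \<Rightarrow> real) \<Rightarrow> (nat \<Rightarrow> real)" where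
  "conv D \<mu> \<nu> = (\<lambda>k. \<Sum>i\<in>spt \<mu>. \<Sum>j\<in>spt \<nu>. \<mu> i * \<nu> j * D i j k)"

definition herm_deformation :: "(nat \<Rightarrow> nat \<Rightarrow> (nat \<Rightarrow> real)) \<Rightarrow> bool" where
  "herm_deformation D \<longleftrightarrow>
     (\<forall>m n. (m \<noteq> n \<or> (m = 0 \<and> n = 0)) \<longrightarrow> D m n = pmass (max m n)) \<and>
     (\<forall>n\<ge>1. fin_prob (D n n) \<and> 0 \<in> spt (D n n)) \<and>
     (\<forall>a b c. conv D (D a b) (pmass c) = conv D (pmass a) (D b c)) \<and>
     (\<forall>n. conv D (pmass 0) (pmass n) = pmass n \<and> conv D (pmass n) (pmass 0) = pmass n) \<and>
     (\<forall>m n. D m n = D n m) \<and>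
     (\<forall>m n. 0 \<in> spt (D m n) \<longleftrightarrow> m = n)"

definition haar :: "(nat \<Rightarrow> nat \<Rightarrow> (nat \<Rightarrow> real)) \<Rightarrow> nat \<Rightarrow> real" where
  "haar D n = (if n = 0 then 1 else 1 / D n n 0)"

definition haar_set :: "(nat \<Rightarrow> nat \<Rightarrow> (nat \<Rightarrow> real)) \<Rightarrow> nat set \<Rightarrow> real" where
  "haar_set D A = (\<Sum>j\<in>A. haar D j)"

end

theory Submission
  imports Defs
begin


definition qv :: "(nat \<Rightarrow> real) \<Rightarrow> nat \<Rightarrow> nat \<Rightarrow> real" where
  "qv v n k = (if k < n then v k / v n else if k = n then (v n - (\<Sum>j<n. v j)) / v n else 0)"

definition Dv :: "(nat \<Rightarrow> real) \<Rightarrow> nat \<Rightarrow> nat \<Rightarrow> nat \<Rightarrow> real" where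
  "Dv v m n = (if m = n then qv v m else pmass (max m n))"

lemma spt_pmass: "spt (pmass c) = {c}"
  by (auto simp: spt_def pmass_def)

lemma conv_pmass_right: "conv D \<mu> (pmass c) = (\<lambda>k. \<Sum>i\<in>spt \<mu>. \<mu> i * D i c k)"
  unfolding conv_def spt_pmass by (simp add: pmass_def)

lemma conv_pmass_left: "conv D (pmass a) \<nu> = (\<lambda>k. \<Sum>j\<in>spt \<nu>. \<nu> j * D a j k)"
  unfolding conv_def spt_pmass by (simp add: pmass_def)

lemma conv_pmass_both: "conv D (pmass a) (pmass b) = D a b"
  unfolding conv_def spt_pmass by (simp add: pmass_def)

lemma sum_spt: assumes "spt \<mu> \<subseteq> A" "finite A"
  shows "(\<Sum>i\<in>spt \<mu>. \<mu> i * g i) = (\<Sum>i\<in>A. \<mu> i * g i)"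
  by (rule sum.mono_neutral_left) (use assms in \<open>auto simp: spt_def\<close>)

lemma spt_qv: "spt (qv v n) \<subseteq> {..n}"
  by (auto simp: spt_def qv_def split: if_splits)

lemma qv_total: assumes "v n > 0" shows "(\<Sum>i\<le>n. qv v n i) = 1"
proof -
  have "(\<Sum>i\<le>n. qv v n i) = (\<Sum>i<n. qv v n i) + qv v n n"
    by (simp add: lessThan_Suc_atMost[symmetric])
  also have "(\<Sum>i<n. qv v n i) = (\<Sum>i<n. v i / v n)"
    by (rule sum.cong) (auto simp: qv_def)
  also have "\<dots> = (\<Sum>i<n. v i) / v n" by (simp add: sum_divide_distrib)
  finally show ?thesis using assms by (simp add: qv_def field_simps)
qed

lemma sum_split3: assumes "(c::nat) \<le> n"
  shows "(\<Sum>i\<le>n. f i) = (\<Sum>i<c. f i) + f c + (\<Sum>i\<in>{c<..n}. f i)"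
proof -
  have "{..n} = {..<c} \<union> insert c {c<..n}" using assms by auto
  moreover have "sum f ({..<c} \<union> {c<..n}) = sum f {..<c} + sum f {c<..n}"
    by (rule sum.union_disjoint) auto
  ultimately show ?thesis by (simp add: add_ac)
qed

lemma Q_greater: assumes "\<forall>j. 0 < v j" "n < c"
  shows "(\<Sum>i\<le>n. qv v n i * Dv v i c k) = pmass c k"
proof -
  have "(\<Sum>i\<le>n. qv v n i * Dv v i c k) = (\<Sum>i\<le>n. qv v n i) * pmass c k"
    unfolding sum_distrib_right
    by (rule sum.cong) (use assms in \<open>auto simp: Dv_def max_def\<close>)
  then show ?thesis using qv_total assms by simp
qed

lemma Q_less: assumes pos: "\<forall>j. 0 < v j" and cn: "c < n"
  shows "(\<Sum>i\<le>n. qv v n i * Dv v i c k) = qv v n k"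
proof -
  let ?f = "\<lambda>i. qv v n i * Dv v i c k"
  have sp: "(\<Sum>i\<le>n. ?f i) = (\<Sum>i<c. ?f i) + ?f c + (\<Sum>i\<in>{c<..n}. ?f i)"
    using cn by (intro sum_split3) simp
  have fc: "?f c = qv v n c * qv v c k" by (simp add: Dv_def)
  have vn: "v n > 0" "v c > 0" using pos by auto
  consider "k < c" | "k = c" | "c < k" by linarith
  then show ?thesis
  proof cases
    case 1
    have a: "(\<Sum>i<c. ?f i) = 0" by (rule sum.neutral) (use 1 in \<open>auto simp: Dv_def pmass_def\<close>)
    have b: "(\<Sum>i\<in>{c<..n}. ?f i) = 0" by (rule sum.neutral) (use 1 in \<open>auto simp: Dv_def pmass_def\<close>)
    show ?thesis using 1 cn vn unfolding sp a b fc by (simp add: qv_def)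
  next
    case 2
    have a: "(\<Sum>i<c. ?f i) = (\<Sum>i<c. v i) / v n"
      unfolding sum_divide_distrib
      by (rule sum.cong) (use 2 cn in \<open>auto simp: Dv_def pmass_def qv_def\<close>)
    have b: "(\<Sum>i\<in>{c<..n}. ?f i) = 0" by (rule sum.neutral) (use 2 in \<open>auto simp: Dv_def pmass_def\<close>)
    show ?thesis using 2 cn vn unfolding sp a b fc by (simp add: qv_def field_simps)
  next
    case 3
    have a: "(\<Sum>i<c. ?f i) = 0" by (rule sum.neutral) (use 3 in \<open>auto simp: Dv_def pmass_def\<close>)
    have b: "(\<Sum>i\<in>{c<..n}. ?f i) = (\<Sum>i\<in>{c<..n}. if i = k then qv v n k else 0)"
      by (rule sum.cong) (use 3 in \<open>auto simp: Dv_def pmass_def max_def\<close>)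
    have c: "(\<Sum>i\<in>{c<..n}. if i = k then qv v n k else 0) = qv v n k"
      using 3 by (simp add: qv_def)
    show ?thesis using 3 unfolding sp a b c fc by (simp add: qv_def)
  qed
qed

lemma qv0: assumes "v 0 = 1" shows "qv v 0 = pmass 0"
  using assms by (auto simp: qv_def pmass_def fun_eq_iff)

lemma Dv_comm: "Dv v m n = Dv v n m"
  by (simp add: Dv_def max.commute)

lemma Dv_assoc:
  assumes pos: "\<forall>j. 0 < v j" and v0: "v 0 = 1"
  shows "conv (Dv v) (Dv v a b) (pmass c) = conv (Dv v) (pmass a) (Dv v b c)"
proof (rule ext)
  fix k
  have L: "conv (Dv v) (qv v n) (pmass c) k = (\<Sum>i\<le>n. qv v n i * Dv v i c k)" for n c
    unfolding conv_pmass_right by (rule sum_spt) (auto simp: spt_qv)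
  have R: "conv (Dv v) (pmass a) (qv v n) k = (\<Sum>i\<le>n. qv v n i * Dv v i a k)" for n a
    unfolding conv_pmass_left by (subst Dv_comm) (rule sum_spt, auto simp: spt_qv)
  show "conv (Dv v) (Dv v a b) (pmass c) k = conv (Dv v) (pmass a) (Dv v b c) k"
  proof (cases "a = b")
    case ab: True
    show ?thesis
    proof (cases "b = c")
      case True
      then show ?thesis using ab by (simp add: Dv_def L R Dv_comm)
    next
      case False
      have lhs: "conv (Dv v) (Dv v a b) (pmass c) k = (\<Sum>i\<le>a. qv v a i * Dv v i c k)"
        using ab by (simp add: Dv_def L)
      have rhs: "conv (Dv v) (pmass a) (Dv v b c) k = Dv v a (max a c) k"
        using ab False by (simp add: Dv_def conv_pmass_both)
      show ?thesis
      proof (cases "a < c")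
        case True
        then show ?thesis unfolding lhs rhs using Q_greater[OF pos True]
          by (simp add: Dv_def max_def)
      next
        case nc: False
        then have "c < a" using ab False by simp
        then show ?thesis unfolding lhs rhs using Q_less[OF pos]
          by (simp add: Dv_def max_def)
      qed
    qed
  next
    case ab: False
    show ?thesis
    proof (cases "b = c")
      case bc: True
      have lhs: "conv (Dv v) (Dv v a b) (pmass c) k = Dv v (max a b) b k"
        using ab bc by (simp add: Dv_def conv_pmass_both)
      have rhs: "conv (Dv v) (pmass a) (Dv v b c) k = (\<Sum>i\<le>b. qv v b i * Dv v i a k)"
        using bc by (simp add: Dv_def R)
      show ?thesis
      proof (cases "b < a")
        case True
        then show ?thesis unfolding lhs rhs using Q_greater[OF pos True]
          by (simp add: Dv_def max_def)
      next
        case nc: False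
        then have "a < b" using ab by simp
        then show ?thesis unfolding lhs rhs using Q_less[OF pos]
          by (simp add: Dv_def max_def)
      qed
    next
      case bc: False
      have "Dv v (max a b) c = Dv v a (max b c)"
        using ab bc by (auto simp: Dv_def max_def)
      then show ?thesis using ab bc by (simp add: Dv_def conv_pmass_both)
    qed
  qed
qed

lemma Dv_herm:
  assumes pos: "\<forall>j. 0 < v j" and v0: "v 0 = 1" and dom: "\<forall>n\<ge>1. (\<Sum>j<n. v j) \<le> v n"
  shows "herm_deformation (Dv v)"
  unfolding herm_deformation_def
proof (intro conjI allI impI)
  fix m n :: nat assume "m \<noteq> n \<or> m = 0 \<and> n = 0"
  then show "Dv v m n = pmass (max m n)" using qv0[of v, OF v0] by (auto simp: Dv_def)
next
  fix n :: nat assume n: "n \<ge> 1"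
  have vn: "v n > 0" using pos by auto
  show "fin_prob (Dv v n n)"
    unfolding fin_prob_def
  proof (intro conjI allI)
    fix k show "0 \<le> Dv v n n k"
      using pos dom n vn by (auto simp: Dv_def qv_def less_imp_le)
  next
    show "finite (spt (Dv v n n))" using spt_qv[of v n] finite_subset by (auto simp: Dv_def)
    show "(\<Sum>k\<in>spt (Dv v n n). Dv v n n k) = 1"
      using sum_spt[of "qv v n" "{..n}" "\<lambda>_. 1"] spt_qv[of v n] qv_total[of v n, OF vn]
      by (simp add: Dv_def)
  qed
  show "0 \<in> spt (Dv v n n)" using n pos by (simp add: Dv_def spt_def qv_def less_imp_neq[symmetric])
next
  fix a b c show "conv (Dv v) (Dv v a b) (pmass c) = conv (Dv v) (pmass a) (Dv v b c)"
    by (rule Dv_assoc[OF pos v0])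
next
  fix n
  show "conv (Dv v) (pmass 0) (pmass n) = pmass n"
    using qv0[of v, OF v0] by (simp add: conv_pmass_both Dv_def)
  show "conv (Dv v) (pmass n) (pmass 0) = pmass n"
    using qv0[of v, OF v0] by (simp add: conv_pmass_both Dv_def)
next
  fix m n show "Dv v m n = Dv v n m" by (rule Dv_comm)
next
  fix m n :: nat
  have "0 \<in> spt (qv v m)" using pos v0 by (auto simp: spt_def qv_def less_imp_neq[symmetric])
  then show "0 \<in> spt (Dv v m n) \<longleftrightarrow> m = n"
    by (auto simp: Dv_def spt_def pmass_def)
qed


lemma herm_off: "herm_deformation D \<Longrightarrow> m \<noteq> n \<or> (m = 0 \<and> n = 0) \<Longrightarrow> D m n = pmass (max m n)"
  unfolding herm_deformation_def by (elim conjE) (erule allE[of _ m], erule allE[of _ n], erule impE)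
lemma herm_fp: "herm_deformation D \<Longrightarrow> n \<ge> 1 \<Longrightarrow> fin_prob (D n n)"
  unfolding herm_deformation_def by (elim conjE) simp
lemma herm_assoc: "herm_deformation D \<Longrightarrow> conv D (D a b) (pmass c) = conv D (pmass a) (D b c)"
  unfolding herm_deformation_def by (elim conjE) simp
lemma herm_sum0:
  assumes h: "herm_deformation D" and m: "m \<ge> 1" and fin: "finite S"
  shows "(\<Sum>i\<in>S. \<mu> i * D i m 0) = (if m \<in> S then \<mu> m * D m m 0 else 0)"
proof -
  have off: "D i m = pmass (max i m)" if "i \<noteq> m" for i
    using herm_off[OF h] that by blast
  have "(\<Sum>i\<in>S. \<mu> i * D i m 0) = (\<Sum>i\<in>S. if i = m then \<mu> m * D m m 0 else 0)"
    by (rule sum.cong) (use m off in \<open>auto simp: pmass_def\<close>)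
  then show ?thesis using fin by simp
qed

lemma uniq:
  assumes h: "herm_deformation D" and hD: "\<forall>n. D n n 0 = 1 / v n"
    and pos: "\<forall>j. 0 < v j" and v0: "v 0 = 1"
  shows "D = Dv v"
proof -
  have off: "D m n = pmass (max m n)" if "m \<noteq> n \<or> (m = 0 \<and> n = 0)" for m n
    using herm_off[OF h] that by blast
  have assoc: "conv D (D a b) (pmass c) = conv D (pmass a) (D b c)" for a b c
    using herm_assoc[OF h] by blast
  have vne: "v j \<noteq> 0" for j using pos by (metis less_irrefl)
  have qq: "D n n = qv v n" if n: "n \<ge> 1" for n
  proof -
    have fp: "fin_prob (D n n)" using herm_fp[OF h n] .
    then have fin: "finite (spt (D n n))" and tot: "(\<Sum>k\<in>spt (D n n). D n n k) = 1"
      by (auto simp: fin_prob_def)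
    have L: "conv D (D n n) (pmass c) 0 = (if c \<in> spt (D n n) then D n n c * D c c 0 else 0)"
      if "c \<ge> 1" for c
      unfolding conv_pmass_right using herm_sum0[OF h that fin] by simp
    have gt: "D n n c = 0" if c: "c > n" for c
    proof -
      have e: "D n c = pmass c" using off[of n c] c by (simp add: max_def)
      have "conv D (pmass n) (D n c) 0 = 0"
        unfolding e conv_pmass_both e using c by (simp add: pmass_def)
      then have "(if c \<in> spt (D n n) then D n n c * D c c 0 else 0) = 0"
        using L[of c] c n assoc[of n n c] by simp
      moreover have "D c c 0 \<noteq> 0" using hD pos by (simp add: vne)
      ultimately show ?thesis by (auto simp: spt_def split: if_splits)
    qed
    have lt: "D n n c = v c / v n" if c: "c < n" for c
    proof (cases "c = 0")
      case True then show ?thesis using hD v0 by simp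
    next
      case False
      have "conv D (pmass n) (D n c) 0 = 1 / v n"
        using c n hD by (simp add: off conv_pmass_both)
      then have e: "(if c \<in> spt (D n n) then D n n c * D c c 0 else 0) = 1 / v n"
        using L[of c] False assoc[of n n c] by simp
      have "1 / v n \<noteq> 0" using pos by (simp add: vne)
      then have "D n n c * (1 / v c) = 1 / v n" using e hD by (simp split: if_splits)
      then show ?thesis using pos by (simp add: field_simps vne)
    qed
    have sptsub: "spt (D n n) \<subseteq> {..n}" unfolding spt_def using gt by (metis (mono_tags) atMost_iff mem_Collect_eq not_le subsetI)
    have "(\<Sum>k\<le>n. D n n k) = 1"
      using tot sum_spt[OF sptsub, of "\<lambda>_. 1"] by simp
    then have "(\<Sum>k<n. D n n k) + D n n n = 1" by (simp add: lessThan_Suc_atMost[symmetric])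
    moreover have "(\<Sum>k<n. D n n k) = (\<Sum>k<n. v k) / v n"
      unfolding sum_divide_distrib by (rule sum.cong) (auto simp: lt)
    ultimately have "D n n n = (v n - (\<Sum>k<n. v k)) / v n"
      using pos by (simp add: field_simps vne)
    then show ?thesis by (auto simp: fun_eq_iff qv_def lt gt)
  qed
  show ?thesis
  proof (intro ext)
    fix m n k
    show "D m n k = Dv v m n k"
    proof (cases "m = n \<and> n \<ge> 1")
      case True then show ?thesis using qq by (simp add: Dv_def)
    next
      case False
      then have "m \<noteq> n \<or> (m = 0 \<and> n = 0)" by auto
      then show ?thesis using off qv0[of v, OF v0] by (auto simp: Dv_def)
    qed
  qed
qed



lemma Dv_diag0: assumes pos: "\<forall>j. 0 < v j" and v0: "v 0 = 1" shows "Dv v n n 0 = 1 / v n"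
  using v0 by (cases "n = 0") (simp_all add: Dv_def qv_def)

lemma haar_Dv: assumes pos: "\<forall>j. 0 < v j" and v0: "v 0 = 1" shows "haar (Dv v) n = v n"
  using Dv_diag0[OF pos v0, of n] v0 by (simp add: haar_def)

lemma haar_set_Dv: assumes pos: "\<forall>j. 0 < v j" and v0: "v 0 = 1"
  shows "haar_set (Dv v) {k. k < n} = (\<Sum>j<n. v j)"
  unfolding haar_set_def lessThan_def[symmetric] using haar_Dv[OF pos v0] by simp

theorem corollary3p4:
  fixes v :: "nat \<Rightarrow> real"
  assumes v_ge1: "\<forall>j. 1 \<le> v j"
    and v0: "v 0 = 1"
    and v_dom: "\<forall>n\<ge>1. (\<Sum>j<n. v j) \<le> v n"
  shows "(\<exists>!D. herm_deformation D \<and> (\<forall>n. D n n 0 = 1 / v n)) \<and>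
    (\<forall>D. herm_deformation D \<and> (\<forall>n. D n n 0 = 1 / v n) \<longrightarrow>
      (\<forall>n. haar D n = v n) \<and>
      (\<forall>n\<ge>1. haar D n - haar_set D {k. k < n} = v n - (\<Sum>j<n. v j)) \<and>
      (\<forall>n\<ge>1. haar_set D {k. k < n} \<le> haar D n) \<and>
      (\<forall>n\<ge>1. (\<forall>m<n. D n n m = haar D m / haar D n) \<and>
               D n n n = (haar D n - haar_set D {k. k < n}) / haar D n \<and>
               (\<forall>m>n. D n n m = 0)) \<and>
      (\<forall>n\<ge>1. (haar D n = haar_set D {k. k < n} \<longrightarrow> spt (D n n) = {k. k < n}) \<and>
               (haar D n > haar_set D {k. k < n} \<longrightarrow> spt (D n n) = {k. k < n} \<union> {n})))"
proof -
  have pos: "\<forall>j. 0 < v j" using v_ge1 by (auto intro: less_le_trans[OF zero_less_one])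
  have vne: "v j \<noteq> 0" for j using pos by (metis less_irrefl)
  have H: "herm_deformation (Dv v)" by (rule Dv_herm[OF pos v0 v_dom])
  have H0: "\<forall>n. Dv v n n 0 = 1 / v n" using Dv_diag0[OF pos v0] by blast
  have P1: "\<exists>!D. herm_deformation D \<and> (\<forall>n. D n n 0 = 1 / v n)"
    using H H0 uniq[OF _ _ pos v0] by blast
  have hv: "haar (Dv v) n = v n" for n by (rule haar_Dv[OF pos v0])
  have hs: "haar_set (Dv v) {k. k < n} = (\<Sum>j<n. v j)" for n by (rule haar_set_Dv[OF pos v0])
  have dd: "Dv v n n = qv v n" for n by (simp add: Dv_def)
  have P2: "(\<forall>n. haar (Dv v) n = v n) \<and>
      (\<forall>n\<ge>1. haar (Dv v) n - haar_set (Dv v) {k. k < n} = v n - (\<Sum>j<n. v j)) \<and>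
      (\<forall>n\<ge>1. haar_set (Dv v) {k. k < n} \<le> haar (Dv v) n) \<and>
      (\<forall>n\<ge>1. (\<forall>m<n. Dv v n n m = haar (Dv v) m / haar (Dv v) n) \<and>
               Dv v n n n = (haar (Dv v) n - haar_set (Dv v) {k. k < n}) / haar (Dv v) n \<and>
               (\<forall>m>n. Dv v n n m = 0)) \<and>
      (\<forall>n\<ge>1. (haar (Dv v) n = haar_set (Dv v) {k. k < n} \<longrightarrow> spt (Dv v n n) = {k. k < n}) \<and>
               (haar (Dv v) n > haar_set (Dv v) {k. k < n} \<longrightarrow> spt (Dv v n n) = {k. k < n} \<union> {n}))"
    unfolding hv hs dd
  proof (intro conjI allI impI)
    fix n :: nat assume n: "n \<ge> 1"
    show "(\<Sum>j<n. v j) \<le> v n" using v_dom n by blast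
    fix m show "m < n \<Longrightarrow> qv v n m = v m / v n" by (simp add: qv_def)
  next
    fix n :: nat
    show "qv v n n = (v n - (\<Sum>j<n. v j)) / v n" by (simp add: qv_def)
    fix m show "n < m \<Longrightarrow> qv v n m = 0" by (simp add: qv_def)
  next
    fix n :: nat assume "v n = (\<Sum>j<n. v j)"
    then show "spt (qv v n) = {k. k < n}"
      using vne by (auto simp: spt_def qv_def split: if_splits)
  next
    fix n :: nat assume "(\<Sum>j<n. v j) < v n"
    then show "spt (qv v n) = {k. k < n} \<union> {n}"
      using vne by (auto simp: spt_def qv_def split: if_splits)
  qed simp_all
  show ?thesis
  proof (rule conjI[OF P1], intro allI impI)
    fix D assume "herm_deformation D \<and> (\<forall>n. D n n 0 = 1 / v n)"
    then have DD: "D = Dv v" using uniq[OF _ _ pos v0] by blast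
    show "(\<forall>n. haar D n = v n) \<and>
      (\<forall>n\<ge>1. haar D n - haar_set D {k. k < n} = v n - (\<Sum>j<n. v j)) \<and>
      (\<forall>n\<ge>1. haar_set D {k. k < n} \<le> haar D n) \<and>
      (\<forall>n\<ge>1. (\<forall>m<n. D n n m = haar D m / haar D n) \<and>
               D n n n = (haar D n - haar_set D {k. k < n}) / haar D n \<and>
               (\<forall>m>n. D n n m = 0)) \<and>
      (\<forall>n\<ge>1. (haar D n = haar_set D {k. k < n} \<longrightarrow> spt (D n n) = {k. k < n}) \<and>
               (haar D n > haar_set D {k. k < n} \<longrightarrow> spt (D n n) = {k. k < n} \<union> {n}))"
      unfolding DD by (rule P2)
  qed
qed

end
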